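(* Let $(F_1,+_1,\cdot_1)$ and $(F_2,+_2,\cdot_2)$ be left near-fields and assume $(F_1,+_1,\cdot_1)$ is a division ring. Then the canonical near-vector spaces $((F_1,+_1,\cdot_1),(F_1,\cdot_1))$ and $((F_2,+_2,\cdot_2),(F_2,\cdot_2))$ are isomorphic as near-vector spaces if and only if $(F_1,+_1,\cdot_1)$ and $(F_2,+_2,\cdot_2)$ are isomorphic as near-fields. In particular, if these canonical near-vector spaces are isomorphic, then $(F_2,+_2,\cdot_2)$ is a division ring.
   Context: A left near-field $(F,+,\cdot)$: $(F,+)$ a group with identity $0$, $(F\setminus\{0\},\cdot)$ a group, $0\cdot\alpha=0$, and $\gamma(\alpha+\beta)=\gamma\alpha+\gamma\beta$. A near-field isomorphism is a bijection preserving $+$ and $\cdot$. The canonical near-vector space of $(F,+,\cdot)$ is $((F,+,\cdot),(F,\cdot))$, with $F$ acting on $(F,+)$ by multiplication. An isomorphism $(\Psi,\varphi)$ of near-vector spaces from $((V_1,\boxplus_1,\boxdot_1),(F_1,\cdot_1))$ to $((V_2,\boxplus_2,\boxdot_2),(F_2,\cdot_2))$ consists of an additive bijection $\Psi:V_1\to V_2$ and a group isomorphism $\varphi:(F_1\setminus\{0\},\cdot_1)\to(F_2\setminus\{0\},\cdot_2)$ with $\Psi(\alpha\boxdot_1u)=\varphi(\alpha)\boxdot_2\Psi(u)$ for all $u\in V_1$, $\alpha\in F_1\setminus\{0\}$. *)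

theory Defs
  imports "HOL-Algebra.Group"
begin

definition left_near_field :: "'a set \<Rightarrow> ('a \<Rightarrow> 'a \<Rightarrow> 'a) \<Rightarrow> ('a \<Rightarrow> 'a \<Rightarrow> 'a) \<Rightarrow> 'a \<Rightarrow> bool" where
  "left_near_field F add mul z \<longleftrightarrow>
     group \<lparr>carrier = F, mult = add, one = z\<rparr> \<and>
     (\<exists>e. group \<lparr>carrier = F - {z}, mult = mul, one = e\<rparr>) \<and>
     (\<forall>a\<in>F. mul z a = z) \<and>
     (\<forall>g\<in>F. \<forall>a\<in>F. \<forall>b\<in>F. mul g (add a b) = add (mul g a) (mul g b))"

definition division_ring_on :: "'a set \<Rightarrow> ('a \<Rightarrow> 'a \<Rightarrow> 'a) \<Rightarrow> ('a \<Rightarrow> 'a \<Rightarrow> 'a) \<Rightarrow> 'a \<Rightarrow> bool" where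
  "division_ring_on F add mul z \<longleftrightarrow>
     left_near_field F add mul z \<and>
     (\<forall>a\<in>F. \<forall>b\<in>F. add a b = add b a) \<and>
     (\<forall>g\<in>F. \<forall>a\<in>F. \<forall>b\<in>F. mul (add a b) g = add (mul a g) (mul b g))"

definition near_field_iso ::
  "'a set \<Rightarrow> ('a \<Rightarrow> 'a \<Rightarrow> 'a) \<Rightarrow> ('a \<Rightarrow> 'a \<Rightarrow> 'a) \<Rightarrow>
   'b set \<Rightarrow> ('b \<Rightarrow> 'b \<Rightarrow> 'b) \<Rightarrow> ('b \<Rightarrow> 'b \<Rightarrow> 'b) \<Rightarrow> ('a \<Rightarrow> 'b) \<Rightarrow> bool" where
  "near_field_iso F1 add1 mul1 F2 add2 mul2 f \<longleftrightarrow>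
     bij_betw f F1 F2 \<and>
     (\<forall>a\<in>F1. \<forall>b\<in>F1. f (add1 a b) = add2 (f a) (f b)) \<and>
     (\<forall>a\<in>F1. \<forall>b\<in>F1. f (mul1 a b) = mul2 (f a) (f b))"

definition near_fields_isomorphic ::
  "'a set \<Rightarrow> ('a \<Rightarrow> 'a \<Rightarrow> 'a) \<Rightarrow> ('a \<Rightarrow> 'a \<Rightarrow> 'a) \<Rightarrow>
   'b set \<Rightarrow> ('b \<Rightarrow> 'b \<Rightarrow> 'b) \<Rightarrow> ('b \<Rightarrow> 'b \<Rightarrow> 'b) \<Rightarrow> bool" where
  "near_fields_isomorphic F1 add1 mul1 F2 add2 mul2 \<longleftrightarrow>
     (\<exists>f. near_field_iso F1 add1 mul1 F2 add2 mul2 f)"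

text \<open>Isomorphism (Psi, phi) of near-vector spaces ((V1,plus1,act1),(F1,mul1)) and
  ((V2,plus2,act2),(F2,mul2)), where z1, z2 are the zeros of the scalar near-fields.\<close>
definition nvs_iso ::
  "'v set \<Rightarrow> ('v \<Rightarrow> 'v \<Rightarrow> 'v) \<Rightarrow> ('a \<Rightarrow> 'v \<Rightarrow> 'v) \<Rightarrow> 'a set \<Rightarrow> ('a \<Rightarrow> 'a \<Rightarrow> 'a) \<Rightarrow> 'a \<Rightarrow>
   'w set \<Rightarrow> ('w \<Rightarrow> 'w \<Rightarrow> 'w) \<Rightarrow> ('b \<Rightarrow> 'w \<Rightarrow> 'w) \<Rightarrow> 'b set \<Rightarrow> ('b \<Rightarrow> 'b \<Rightarrow> 'b) \<Rightarrow> 'b \<Rightarrow>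
   ('v \<Rightarrow> 'w) \<Rightarrow> ('a \<Rightarrow> 'b) \<Rightarrow> bool" where
  "nvs_iso V1 plus1 act1 F1 mul1 z1 V2 plus2 act2 F2 mul2 z2 \<Psi> \<phi> \<longleftrightarrow>
     bij_betw \<Psi> V1 V2 \<and>
     (\<forall>u\<in>V1. \<forall>v\<in>V1. \<Psi> (plus1 u v) = plus2 (\<Psi> u) (\<Psi> v)) \<and>
     bij_betw \<phi> (F1 - {z1}) (F2 - {z2}) \<and>
     (\<forall>a\<in>F1 - {z1}. \<forall>b\<in>F1 - {z1}. \<phi> (mul1 a b) = mul2 (\<phi> a) (\<phi> b)) \<and>
     (\<forall>u\<in>V1. \<forall>a\<in>F1 - {z1}. \<Psi> (act1 a u) = act2 (\<phi> a) (\<Psi> u))"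

definition canonical_nvs_isomorphic ::
  "'a set \<Rightarrow> ('a \<Rightarrow> 'a \<Rightarrow> 'a) \<Rightarrow> ('a \<Rightarrow> 'a \<Rightarrow> 'a) \<Rightarrow> 'a \<Rightarrow>
   'b set \<Rightarrow> ('b \<Rightarrow> 'b \<Rightarrow> 'b) \<Rightarrow> ('b \<Rightarrow> 'b \<Rightarrow> 'b) \<Rightarrow> 'b \<Rightarrow> bool" where
  "canonical_nvs_isomorphic F1 add1 mul1 z1 F2 add2 mul2 z2 \<longleftrightarrow>
     (\<exists>\<Psi> \<phi>. nvs_iso F1 add1 mul1 F1 mul1 z1 F2 add2 mul2 F2 mul2 z2 \<Psi> \<phi>)"

end

theory Submission
  imports Defs
begin

lemma grp_idem:
  assumes "group \<lparr>carrier = F, mult = add, one = z\<rparr>" "x \<in> F" "add x x = x"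
  shows "x = z"
proof -
  interpret G: group "\<lparr>carrier = F, mult = add, one = z\<rparr>" by fact
  show ?thesis using G.l_cancel_one[of x x] assms by simp
qed

lemma lnf_add_closed:
  assumes "left_near_field F add mul z" "a \<in> F" "b \<in> F"
  shows "add a b \<in> F"
proof -
  interpret G: group "\<lparr>carrier = F, mult = add, one = z\<rparr>" using assms(1) unfolding left_near_field_def by blast
  show ?thesis using G.m_closed[of a b] assms by simp
qed

lemma lnf_zero_in: "left_near_field F add mul z \<Longrightarrow> z \<in> F"
  unfolding left_near_field_def using group.is_monoid monoid.one_closed by fastforce

lemma lnf_mul_nz:
  assumes "left_near_field F add mul z" "a \<in> F - {z}" "b \<in> F - {z}"
  shows "mul a b \<in> F - {z}"
proof -
  obtain e where "group \<lparr>carrier = F - {z}, mult = mul, one = e\<rparr>" using assms(1) unfolding left_near_field_def by blast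
  then interpret G: group "\<lparr>carrier = F - {z}, mult = mul, one = e\<rparr>" .
  show ?thesis using G.m_closed[of a b] assms by simp
qed

lemma lnf_zero_right:
  assumes L: "left_near_field F add mul z" and g: "g \<in> F"
  shows "mul g z = z"
proof -
  interpret G: group "\<lparr>carrier = F, mult = add, one = z\<rparr>" using assms(1) unfolding left_near_field_def by blast
  obtain e where "group \<lparr>carrier = F - {z}, mult = mul, one = e\<rparr>" using assms(1) unfolding left_near_field_def by blast
  then interpret M: group "\<lparr>carrier = F - {z}, mult = mul, one = e\<rparr>" .
  have e: "e \<in> F" "e \<noteq> z" using M.one_closed by auto
  define n where "n = inv\<^bsub>\<lparr>carrier = F, mult = add, one = z\<rparr>\<^esub> e"
  have n: "n \<in> F" "add e n = z" using G.inv_closed[of e] G.r_inv[of e] e unfolding n_def by auto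
  have nz: "n \<noteq> z" using n e G.r_one[of e] by auto
  have zdist: "\<forall>a\<in>F. mul z a = z" and dist: "\<forall>g\<in>F. \<forall>a\<in>F. \<forall>b\<in>F. mul g (add a b) = add (mul g a) (mul g b)"
    using L unfolding left_near_field_def by auto
  have z: "z \<in> F" using lnf_zero_in[OF L] .
  show ?thesis
  proof (cases "g = z")
    case True then show ?thesis using zdist z by simp
  next
    case False
    have "mul g (add e n) = add (mul g e) (mul g n)" using dist g e n by blast
    then have "mul g z = add (mul g e) (mul g n)" using n(2) by simp
    moreover have "mul g e \<in> F" "mul g n \<in> F" using lnf_mul_nz[OF L, of g] False g e n nz by auto
    ultimately have in1: "mul g z \<in> F" using lnf_add_closed[OF L] by simp
    have zz: "add z z = z" using G.l_one[of z] z by simp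
    have "mul g (add z z) = add (mul g z) (mul g z)" using dist g z by blast
    then have "add (mul g z) (mul g z) = mul g z" using zz by simp
    then show ?thesis using grp_idem[OF G.is_group in1] by blast
  qed
qed

lemma lnf_mul_closed:
  assumes L: "left_near_field F add mul z" and a: "a \<in> F" and b: "b \<in> F"
  shows "mul a b \<in> F"
proof -
  have zl: "mul z b = z" using L b unfolding left_near_field_def by blast
  show ?thesis
  proof (cases "a = z")
    case True then show ?thesis using zl lnf_zero_in[OF L] by simp
  next
    case False
    show ?thesis
    proof (cases "b = z")
      case True then show ?thesis using lnf_zero_right[OF L a] lnf_zero_in[OF L] by simp
    next
      case False2: False
      then show ?thesis using lnf_mul_nz[OF L, of a b] False a b by blast
    qed
  qed
qed

lemma lnf_add_grp: "left_near_field F add mul z \<Longrightarrow> group \<lparr>carrier = F, mult = add, one = z\<rparr>"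
  unfolding left_near_field_def by blast

lemma add_hom_zero:
  assumes L1: "left_near_field F1 add1 mul1 z1" and L2: "left_near_field F2 add2 mul2 z2"
    and f: "\<forall>a\<in>F1. f a \<in> F2" and h: "\<forall>a\<in>F1. \<forall>b\<in>F1. f (add1 a b) = add2 (f a) (f b)"
  shows "f z1 = z2"
proof -
  interpret G: group "\<lparr>carrier = F1, mult = add1, one = z1\<rparr>" using lnf_add_grp[OF L1] .
  have z: "z1 \<in> F1" using lnf_zero_in[OF L1] .
  have "add1 z1 z1 = z1" using G.l_one[of z1] z by simp
  then have "add2 (f z1) (f z1) = f z1" using h z by metis
  then show ?thesis using grp_idem[OF lnf_add_grp[OF L2]] f z by blast
qed

lemma nvs_to_iso:
  assumes L1: "left_near_field F1 add1 mul1 z1" and L2: "left_near_field F2 add2 mul2 z2"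
    and N: "nvs_iso F1 add1 mul1 F1 mul1 z1 F2 add2 mul2 F2 mul2 z2 \<Psi> \<phi>"
  shows "\<exists>h. near_field_iso F1 add1 mul1 F2 add2 mul2 h"
proof -
  have Pb: "bij_betw \<Psi> F1 F2" and Pa: "\<forall>u\<in>F1. \<forall>v\<in>F1. \<Psi> (add1 u v) = add2 (\<Psi> u) (\<Psi> v)"
    and pb: "bij_betw \<phi> (F1 - {z1}) (F2 - {z2})"
    and pm: "\<forall>a\<in>F1 - {z1}. \<forall>b\<in>F1 - {z1}. \<phi> (mul1 a b) = mul2 (\<phi> a) (\<phi> b)"
    and Pm: "\<forall>u\<in>F1. \<forall>a\<in>F1 - {z1}. \<Psi> (mul1 a u) = mul2 (\<phi> a) (\<Psi> u)"
    using N unfolding nvs_iso_def by auto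
  have PF: "\<And>a. a \<in> F1 \<Longrightarrow> \<Psi> a \<in> F2" using Pb bij_betw_apply by fast
  have pF: "\<And>a. a \<in> F1 - {z1} \<Longrightarrow> \<phi> a \<in> F2 - {z2}" using pb bij_betw_apply by fast
  have z1: "z1 \<in> F1" using lnf_zero_in[OF L1] .
  have z2: "z2 \<in> F2" using lnf_zero_in[OF L2] .
  have P0: "\<Psi> z1 = z2" using add_hom_zero[OF L1 L2] PF Pa by blast
  have Pnz: "\<And>a. a \<in> F1 - {z1} \<Longrightarrow> \<Psi> a \<in> F2 - {z2}"
  proof -
    fix a assume a: "a \<in> F1 - {z1}"
    have "\<Psi> a \<noteq> \<Psi> z1" using a z1 Pb unfolding bij_betw_def inj_on_def by blast
    then show "\<Psi> a \<in> F2 - {z2}" using P0 PF a by auto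
  qed
  obtain e1 where "group \<lparr>carrier = F1 - {z1}, mult = mul1, one = e1\<rparr>" using L1 unfolding left_near_field_def by blast
  then interpret M1: group "\<lparr>carrier = F1 - {z1}, mult = mul1, one = e1\<rparr>" .
  obtain e2 where "group \<lparr>carrier = F2 - {z2}, mult = mul2, one = e2\<rparr>" using L2 unfolding left_near_field_def by blast
  then interpret M2: group "\<lparr>carrier = F2 - {z2}, mult = mul2, one = e2\<rparr>" .
  have e1: "e1 \<in> F1 - {z1}" using M1.one_closed by simp
  define c where "c = \<Psi> e1"
  have c: "c \<in> F2 - {z2}" using Pnz e1 unfolding c_def .
  define ci where "ci = inv\<^bsub>\<lparr>carrier = F2 - {z2}, mult = mul2, one = e2\<rparr>\<^esub> c"
  have ci: "ci \<in> F2 - {z2}" "mul2 ci c = e2" "mul2 c ci = e2"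
    using M2.inv_closed[of c] M2.l_inv[of c] M2.r_inv[of c] c unfolding ci_def by auto
  have A2: "\<And>x y w. x \<in> F2 - {z2} \<Longrightarrow> y \<in> F2 - {z2} \<Longrightarrow> w \<in> F2 - {z2} \<Longrightarrow> mul2 (mul2 x y) w = mul2 x (mul2 y w)"
    using M2.m_assoc by simp
  have C2: "\<And>x y. x \<in> F2 - {z2} \<Longrightarrow> y \<in> F2 - {z2} \<Longrightarrow> mul2 x y \<in> F2 - {z2}"
    using M2.m_closed by simp
  have l2: "\<And>x. x \<in> F2 - {z2} \<Longrightarrow> mul2 e2 x = x" using M2.l_one by simp
  have r2: "\<And>x. x \<in> F2 - {z2} \<Longrightarrow> mul2 x e2 = x" using M2.r_one by simp
  have r1: "\<And>x. x \<in> F1 - {z1} \<Longrightarrow> mul1 x e1 = x" using M1.r_one by simp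
  have Psi_eq: "\<And>a. a \<in> F1 - {z1} \<Longrightarrow> \<Psi> a = mul2 (\<phi> a) c"
    using Pm e1 r1 unfolding c_def by (metis DiffD1)
  have dist2: "\<forall>g\<in>F2. \<forall>a\<in>F2. \<forall>b\<in>F2. mul2 g (add2 a b) = add2 (mul2 g a) (mul2 g b)"
    using L2 unfolding left_near_field_def by blast
  have zl1: "\<And>a. a \<in> F1 \<Longrightarrow> mul1 z1 a = z1" using L1 unfolding left_near_field_def by blast
  have zl2: "\<And>a. a \<in> F2 \<Longrightarrow> mul2 z2 a = z2" using L2 unfolding left_near_field_def by blast
  have zr1: "\<And>a. a \<in> F1 \<Longrightarrow> mul1 a z1 = z1" using lnf_zero_right[OF L1] .
  have zr2: "\<And>a. a \<in> F2 \<Longrightarrow> mul2 a z2 = z2" using lnf_zero_right[OF L2] .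
  define h where "h = (\<lambda>x. mul2 ci (\<Psi> x))"
  have hF: "\<And>a. a \<in> F1 \<Longrightarrow> h a \<in> F2" unfolding h_def using lnf_mul_closed[OF L2] ci PF by blast
  have h0: "h z1 = z2" unfolding h_def using P0 zr2 ci by auto
  have hnz: "\<And>a. a \<in> F1 - {z1} \<Longrightarrow> h a = mul2 ci (mul2 (\<phi> a) c)" unfolding h_def using Psi_eq by simp
  have bl: "bij_betw (\<lambda>y. mul2 ci y) F2 F2"
  proof (rule bij_betwI[where g = "\<lambda>y. mul2 c y"])
    show "(\<lambda>y. mul2 ci y) \<in> F2 \<rightarrow> F2" using lnf_mul_closed[OF L2] ci by blast
    show "(\<lambda>y. mul2 c y) \<in> F2 \<rightarrow> F2" using lnf_mul_closed[OF L2] c by blast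
    fix y assume y: "y \<in> F2"
    show "mul2 c (mul2 ci y) = y"
    proof (cases "y = z2")
      case True then show ?thesis using zr2 c ci by auto
    next
      case False then show ?thesis using A2[of c ci y] c ci y l2 by auto
    qed
    show "mul2 ci (mul2 c y) = y"
    proof (cases "y = z2")
      case True then show ?thesis using zr2 c ci by auto
    next
      case False then show ?thesis using A2[of ci c y] c ci y l2 by auto
    qed
  qed
  have hb: "bij_betw h F1 F2"
    unfolding h_def using bij_betw_comp_iff[of \<Psi> F1 F2 "\<lambda>y. mul2 ci y" F2] Pb bl by (simp add: o_def)
  have ha: "\<forall>a\<in>F1. \<forall>b\<in>F1. h (add1 a b) = add2 (h a) (h b)"
    unfolding h_def using Pa dist2 ci PF by simp
  have hm: "\<forall>a\<in>F1. \<forall>b\<in>F1. h (mul1 a b) = mul2 (h a) (h b)"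
  proof (intro ballI)
    fix a b assume a: "a \<in> F1" and b: "b \<in> F1"
    show "h (mul1 a b) = mul2 (h a) (h b)"
    proof (cases "a = z1 \<or> b = z1")
      case True
      then show ?thesis using zl1 zr1 zl2 zr2 h0 hF a b by auto
    next
      case False
      then have a': "a \<in> F1 - {z1}" and b': "b \<in> F1 - {z1}" using a b by auto
      have pa: "\<phi> a \<in> F2 - {z2}" and pbb: "\<phi> b \<in> F2 - {z2}" using pF a' b' by auto
      have "h (mul1 a b) = mul2 ci (mul2 (\<phi> a) (\<Psi> b))" unfolding h_def using Pm a' b by simp
      also have "\<dots> = mul2 ci (mul2 (\<phi> a) (mul2 (\<phi> b) c))" using Psi_eq b' by simp
      also have "\<dots> = mul2 (mul2 ci (mul2 (\<phi> a) c)) (mul2 ci (mul2 (\<phi> b) c))"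
      proof -
        have "mul2 (mul2 ci (mul2 (\<phi> a) c)) (mul2 ci (mul2 (\<phi> b) c))
            = mul2 ci (mul2 (mul2 (\<phi> a) c) (mul2 ci (mul2 (\<phi> b) c)))"
          using A2 C2 ci c pa pbb by simp
        also have "\<dots> = mul2 ci (mul2 (\<phi> a) (mul2 c (mul2 ci (mul2 (\<phi> b) c))))"
          using A2 C2 ci c pa pbb by simp
        also have "mul2 c (mul2 ci (mul2 (\<phi> b) c)) = mul2 (\<phi> b) c"
          using A2[of c ci "mul2 (\<phi> b) c"] C2 ci c pbb l2 by simp
        finally show ?thesis by simp
      qed
      also have "\<dots> = mul2 (h a) (h b)" using hnz a' b' by simp
      finally show ?thesis .
    qed
  qed
  show ?thesis unfolding near_field_iso_def using hb ha hm by blast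
qed

lemma iso_to_nvs:
  assumes L1: "left_near_field F1 add1 mul1 z1" and L2: "left_near_field F2 add2 mul2 z2"
    and I: "near_field_iso F1 add1 mul1 F2 add2 mul2 f"
  shows "nvs_iso F1 add1 mul1 F1 mul1 z1 F2 add2 mul2 F2 mul2 z2 f f"
proof -
  have b: "bij_betw f F1 F2" and a: "\<forall>a\<in>F1. \<forall>b\<in>F1. f (add1 a b) = add2 (f a) (f b)"
    and m: "\<forall>a\<in>F1. \<forall>b\<in>F1. f (mul1 a b) = mul2 (f a) (f b)"
    using I unfolding near_field_iso_def by auto
  have f0: "f z1 = z2" using add_hom_zero[OF L1 L2] a b bij_betw_apply by fast
  have z1: "z1 \<in> F1" using lnf_zero_in[OF L1] .
  have z2: "z2 \<in> F2" using lnf_zero_in[OF L2] .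
  have "bij_betw f (F1 - {z1}) (F2 - {z2})"
    by (rule bij_betw_DiffI[OF b]) (use f0 z1 z2 in auto)
  then show ?thesis unfolding nvs_iso_def using b a m by auto
qed

lemma iso_div:
  assumes L1: "left_near_field F1 add1 mul1 z1" and L2: "left_near_field F2 add2 mul2 z2"
    and D: "division_ring_on F1 add1 mul1 z1"
    and I: "near_field_iso F1 add1 mul1 F2 add2 mul2 f"
  shows "division_ring_on F2 add2 mul2 z2"
proof -
  have b: "bij_betw f F1 F2" and a: "\<forall>a\<in>F1. \<forall>b\<in>F1. f (add1 a b) = add2 (f a) (f b)"
    and m: "\<forall>a\<in>F1. \<forall>b\<in>F1. f (mul1 a b) = mul2 (f a) (f b)"
    using I unfolding near_field_iso_def by auto
  have cm: "\<forall>a\<in>F1. \<forall>b\<in>F1. add1 a b = add1 b a"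
    and rd: "\<forall>g\<in>F1. \<forall>a\<in>F1. \<forall>b\<in>F1. mul1 (add1 a b) g = add1 (mul1 a g) (mul1 b g)"
    using D unfolding division_ring_on_def by auto
  have sur: "\<And>x. x \<in> F2 \<Longrightarrow> \<exists>a\<in>F1. x = f a" using b unfolding bij_betw_def by auto
  have "\<forall>x\<in>F2. \<forall>y\<in>F2. add2 x y = add2 y x"
  proof (intro ballI)
    fix x y assume "x \<in> F2" "y \<in> F2"
    then obtain p q where "p \<in> F1" "q \<in> F1" "x = f p" "y = f q" using sur by metis
    then show "add2 x y = add2 y x" using a cm by metis
  qed
  moreover have "\<forall>g\<in>F2. \<forall>x\<in>F2. \<forall>y\<in>F2. mul2 (add2 x y) g = add2 (mul2 x g) (mul2 y g)"
  proof (intro ballI)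
    fix g x y assume "g \<in> F2" "x \<in> F2" "y \<in> F2"
    then obtain r p q where rpq: "r \<in> F1" "p \<in> F1" "q \<in> F1" "g = f r" "x = f p" "y = f q" using sur by metis
    have "mul2 (add2 x y) g = f (mul1 (add1 p q) r)" using rpq a m lnf_add_closed[OF L1] by simp
    also have "\<dots> = f (add1 (mul1 p r) (mul1 q r))" using rd rpq by simp
    also have "\<dots> = add2 (mul2 x g) (mul2 y g)" using rpq a m lnf_mul_closed[OF L1] by simp
    finally show "mul2 (add2 x y) g = add2 (mul2 x g) (mul2 y g)" .
  qed
  ultimately show ?thesis unfolding division_ring_on_def using L2 by blast
qed

theorem mainTheorem10:
  fixes F1 :: "'a set" and add1 mul1 :: "'a \<Rightarrow> 'a \<Rightarrow> 'a" and z1 :: 'a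
    and F2 :: "'b set" and add2 mul2 :: "'b \<Rightarrow> 'b \<Rightarrow> 'b" and z2 :: 'b
  assumes "left_near_field F1 add1 mul1 z1"
    and "left_near_field F2 add2 mul2 z2"
    and "division_ring_on F1 add1 mul1 z1"
  shows "(canonical_nvs_isomorphic F1 add1 mul1 z1 F2 add2 mul2 z2 \<longleftrightarrow>
            near_fields_isomorphic F1 add1 mul1 F2 add2 mul2)
       \<and> (canonical_nvs_isomorphic F1 add1 mul1 z1 F2 add2 mul2 z2 \<longrightarrow>
            division_ring_on F2 add2 mul2 z2)"
  using nvs_to_iso[OF assms(1,2)] iso_to_nvs[OF assms(1,2)] iso_div[OF assms]
  unfolding canonical_nvs_isomorphic_def near_fields_isomorphic_def by blast

end
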